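(* Let $G=(V,E)$ be a connected undirected graph and $u:V\to\mathbb{R}$. (i) If $u\ge0$ and $\Delta_\infty u\le 0$ on $V$, then $u$ is constant. (ii) If $u\le 0$ and $\Delta_\infty u\ge0$ on $V$, then $u$ is constant.
   Context: For $x,y\in V$ write $x\sim y$ if $\{x,y\}\in E$. The discrete infinity Laplacian is $\Delta_\infty u(x)=\inf_{y\sim x}u(y)+\sup_{y\sim x}u(y)-2u(x)$. The graph is not assumed locally finite. *)

theory Defs
  imports "HOL-Library.Extended_Real"
begin

definition graph :: "'a set \<Rightarrow> 'a set set \<Rightarrow> bool" where
  "graph V E \<longleftrightarrow> (\<forall>e\<in>E. \<exists>x y. x \<in> V \<and> y \<in> V \<and> x \<noteq> y \<and> e = {x, y})"

definition adj :: "'a set set \<Rightarrow> 'a \<Rightarrow> 'a \<Rightarrow> bool" where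
  "adj E x y \<longleftrightarrow> {x, y} \<in> E"

definition connected_graph :: "'a set \<Rightarrow> 'a set set \<Rightarrow> bool" where
  "connected_graph V E \<longleftrightarrow> graph V E \<and>
     (\<forall>x\<in>V. \<forall>y\<in>V. (x, y) \<in> {(a, b). adj E a b}\<^sup>*)"

text \<open>Discrete infinity Laplacian, valued in the extended reals since inf/sup over
  (possibly infinitely many) neighbours may be infinite.\<close>
definition inf_laplacian :: "'a set set \<Rightarrow> ('a \<Rightarrow> real) \<Rightarrow> 'a \<Rightarrow> ereal" where
  "inf_laplacian E u x =
     (INF y\<in>{y. adj E x y}. ereal (u y)) + (SUP y\<in>{y. adj E x y}. ereal (u y)) - ereal (2 * u x)"

end

theory Submission
  imports Defs
begin

lemma adj_sym: "adj E x y \<Longrightarrow> adj E y x"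
  unfolding adj_def by (simp add: insert_commute)

lemma adj_V: "graph V E \<Longrightarrow> adj E x y \<Longrightarrow> x \<in> V \<and> y \<in> V"
  unfolding adj_def graph_def by (metis doubleton_eq_iff)

lemma step1:
  assumes L: "inf_laplacian E u y \<le> 0" and a: "adj E y x" and d: "u x - u y > c"
  shows "\<exists>z. adj E y z \<and> u y - u z > c"
proof -
  define I where "I = (INF z\<in>{z. adj E y z}. ereal (u z))"
  define S where "S = (SUP z\<in>{z. adj E y z}. ereal (u z))"
  have S: "ereal (u x) \<le> S" unfolding S_def using a by (auto intro: SUP_upper)
  have L': "I + S - ereal (2 * u y) \<le> 0" using L unfolding inf_laplacian_def I_def S_def .
  have "I < ereal (u y - c)"
  proof (rule ccontr)
    assume "\<not> I < ereal (u y - c)"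
    hence "I \<ge> ereal (u y - c)" by simp
    with S L' d show False
      by (cases I; cases S) auto
  qed
  then obtain z where "adj E y z" "ereal (u z) < ereal (u y - c)"
    unfolding I_def by (auto simp: INF_less_iff)
  thus ?thesis by auto
qed

lemma step2:
  assumes L: "inf_laplacian E u y \<ge> 0" and a: "adj E y x" and d: "u y - u x > c"
  shows "\<exists>z. adj E y z \<and> u z - u y > c"
proof -
  define I where "I = (INF z\<in>{z. adj E y z}. ereal (u z))"
  define S where "S = (SUP z\<in>{z. adj E y z}. ereal (u z))"
  have I: "I \<le> ereal (u x)" unfolding I_def using a by (auto intro: INF_lower)
  have L': "I + S - ereal (2 * u y) \<ge> 0" using L unfolding inf_laplacian_def I_def S_def .
  have "S > ereal (u y + c)"
  proof (rule ccontr)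
    assume "\<not> S > ereal (u y + c)"
    hence "S \<le> ereal (u y + c)" by simp
    with I L' d show False
      by (cases I; cases S) auto
  qed
  then obtain z where "adj E y z" "ereal (u z) > ereal (u y + c)"
    unfolding S_def by (auto simp: less_SUP_iff)
  thus ?thesis by auto
qed

lemma chain:
  fixes f :: "'a \<Rightarrow> real"
  assumes g: "graph V E" and pos: "\<forall>x\<in>V. f x \<ge> 0"
    and st: "\<And>x y c. adj E y x \<Longrightarrow> y \<in> V \<Longrightarrow> f x - f y > c \<Longrightarrow> \<exists>z. adj E y z \<and> f y - f z > c"
    and a: "adj E x y"
  shows "f x \<le> f y"
proof (rule ccontr)
  assume "\<not> f x \<le> f y"
  define c where "c = (f x - f y) / 2"
  have c: "c > 0" using \<open>\<not> f x \<le> f y\<close> unfolding c_def by simp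
  have "\<exists>a b. adj E a b \<and> f a - f b > c \<and> f b \<le> f y - real n * c" for n
  proof (induction n)
    case 0
    show ?case using a c unfolding c_def by (intro exI[of _ x] exI[of _ y]) auto
  next
    case (Suc n)
    then obtain a b where ab: "adj E a b" "f a - f b > c" "f b \<le> f y - real n * c" by blast
    have "b \<in> V" using adj_V[OF g ab(1)] by simp
    then obtain z where z: "adj E b z" "f b - f z > c" using st[OF adj_sym[OF ab(1)] _ ab(2)] by blast
    have "f z \<le> f y - real (Suc n) * c" using z ab by (simp add: algebra_simps)
    thus ?case using z by blast
  qed
  moreover obtain n where "f y < real n * c" using reals_Archimedean3[OF c] by blast
  ultimately obtain a b where ab: "adj E a b" "f b \<le> f y - real n * c" by blast
  have "b \<in> V" using adj_V[OF g ab(1)] by simp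
  with pos ab \<open>f y < real n * c\<close> show False by force
qed

lemma const:
  fixes f :: "'a \<Rightarrow> real"
  assumes cg: "connected_graph V E" and e: "\<And>x y. adj E x y \<Longrightarrow> f x \<le> f y"
  shows "\<exists>c. \<forall>x\<in>V. f x = c"
proof (cases "V = {}")
  case True thus ?thesis by simp
next
  case False
  then obtain x0 where x0: "x0 \<in> V" by blast
  have "f a = f b" if "(a, b) \<in> {(a, b). adj E a b}\<^sup>*" for a b
    using that
  proof (induction rule: rtrancl_induct)
    case base show ?case by simp
  next
    case (step y z)
    hence "adj E y z" by simp
    with e adj_sym have "f y = f z" by (meson order_antisym)
    with step show ?case by simp
  qed
  with cg x0 show ?thesis unfolding connected_graph_def by metis
qed

theorem theorem3p7:
  fixes V :: "'a set" and E :: "'a set set" and u :: "'a \<Rightarrow> real"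
  assumes "connected_graph V E"
  shows "((\<forall>x\<in>V. u x \<ge> 0) \<and> (\<forall>x\<in>V. inf_laplacian E u x \<le> 0) \<longrightarrow> (\<exists>c. \<forall>x\<in>V. u x = c))
       \<and> ((\<forall>x\<in>V. u x \<le> 0) \<and> (\<forall>x\<in>V. inf_laplacian E u x \<ge> 0) \<longrightarrow> (\<exists>c. \<forall>x\<in>V. u x = c))"
proof (intro conjI impI)
  have g: "graph V E" using assms unfolding connected_graph_def by simp
  {
    assume h: "(\<forall>x\<in>V. u x \<ge> 0) \<and> (\<forall>x\<in>V. inf_laplacian E u x \<le> 0)"
    have "u x \<le> u y" if "adj E x y" for x y
      by (rule chain[OF g, of u]) (use h that in \<open>auto intro: step1\<close>)
    then show "\<exists>c. \<forall>x\<in>V. u x = c" using const[OF assms] by blast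
  }
  {
    assume h: "(\<forall>x\<in>V. u x \<le> 0) \<and> (\<forall>x\<in>V. inf_laplacian E u x \<ge> 0)"
    have "- u x \<le> - u y" if "adj E x y" for x y
      by (rule chain[OF g, of "\<lambda>x. - u x"]) (use h that in \<open>auto intro: step2\<close>)
    then have "\<exists>c. \<forall>x\<in>V. - u x = c" using const[OF assms, of "\<lambda>x. - u x"] by blast
    then show "\<exists>c. \<forall>x\<in>V. u x = c" by (metis minus_equation_iff)
  }
qed

end
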